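(* Let $0<z_0<1$, $t>0$ and $r=e^t$. Then: (1) the largest $s>0$ with $B_\rho(z_0,s)\subset B_h(z_0,t)$ is $s=t$; (2) the smallest $s>0$ with $B_h(z_0,t)\subset B_\rho(z_0,s)$ is the number $s$ satisfying $$\operatorname{th}\frac{s}{2}=\frac{r-1}{\sqrt{(r+1)^2-4rz_0^2}}.$$
   Context: $\mathbb{B}^2$ is the open unit disk in $\mathbb{C}$. The hyperbolic metric is given by $\operatorname{sh}\frac{\rho_{\mathbb{B}^2}(x,y)}{2}=\frac{|x-y|}{\sqrt{(1-|x|^2)(1-|y|^2)}}$, and $B_\rho(z_0,s)=\{z\in\mathbb{B}^2:\rho_{\mathbb{B}^2}(z_0,z)<s\}$. For distinct $x,y\in\mathbb{B}^2$ the Hilbert metric is $h_{\mathbb{B}^2}(x,y)=\log\frac{|u-y||x-v|}{|u-x||y-v|}$, where $u,v$ are the intersection points of the line through $x,y$ with the unit circle, labelled so that $|u-x|<|u-y|$; $h_{\mathbb{B}^2}(x,x)=0$; and $B_h(z_0,t)=\{z\in\mathbb{B}^2:h_{\mathbb{B}^2}(z_0,z)<t\}$. *)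

theory Defs
  imports "HOL-Analysis.Analysis"
begin

definition unit_disk :: "complex set" where
  "unit_disk = {z. norm z < 1}"

definition hyp_rho :: "complex \<Rightarrow> complex \<Rightarrow> real" where
  "hyp_rho x y = 2 * arsinh (norm (x - y) / sqrt ((1 - (norm x)\<^sup>2) * (1 - (norm y)\<^sup>2)))"

definition chord_u :: "complex \<Rightarrow> complex \<Rightarrow> complex" where
  "chord_u x y = (THE u. norm u = 1 \<and> (\<exists>a::real. u = x + of_real a * (y - x))
                      \<and> norm (u - x) < norm (u - y))"

definition chord_v :: "complex \<Rightarrow> complex \<Rightarrow> complex" where
  "chord_v x y = (THE v. norm v = 1 \<and> (\<exists>a::real. v = x + of_real a * (y - x))
                      \<and> v \<noteq> chord_u x y)"

definition hilbert_h :: "complex \<Rightarrow> complex \<Rightarrow> real" where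
  "hilbert_h x y = (if x = y then 0 else
     (let u = chord_u x y; v = chord_v x y in
       ln ((norm (u - y) * norm (x - v)) / (norm (u - x) * norm (y - v)))))"

definition ball_rho :: "complex \<Rightarrow> real \<Rightarrow> complex set" where
  "ball_rho z0 s = {z \<in> unit_disk. hyp_rho z0 z < s}"

definition ball_h :: "complex \<Rightarrow> real \<Rightarrow> complex set" where
  "ball_h z0 t = {z \<in> unit_disk. hilbert_h z0 z < t}"

definition is_greatest :: "real set \<Rightarrow> real \<Rightarrow> bool" where
  "is_greatest S x \<longleftrightarrow> x \<in> S \<and> (\<forall>y\<in>S. y \<le> x)"

definition is_least :: "real set \<Rightarrow> real \<Rightarrow> bool" where
  "is_least S x \<longleftrightarrow> x \<in> S \<and> (\<forall>y\<in>S. x \<le> y)"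


end

theory Submission
  imports Defs
begin

definition Kq :: "real \<Rightarrow> complex \<Rightarrow> real" where
  "Kq p y = (1 - p * Re y)^2 / ((1 - p^2) * (1 - (cmod y)^2))"

lemma chord_cosh:
  fixes p :: real and y :: complex
  assumes p: "-1 < p" "p < 1" and y: "cmod y < 1" and ne: "y \<noteq> of_real p"
  shows "hilbert_h (of_real p) y \<ge> 0 \<and> cosh (hilbert_h (of_real p) y) = 2 * Kq p y - 1"
proof -
  define x where "x = complex_of_real p"
  define d where "d = y - x"
  define dX where "dX = Re d"
  define dY where "dY = Im d"
  define m where "m = dX^2 + dY^2"
  define q where "q = 1 - p^2"
  have "p^2 < 1" using p by (simp add: abs_square_less_1 abs_less_iff)
  hence q: "q > 0" unfolding q_def by simp
  have d0: "d \<noteq> 0" using ne by (simp add: d_def x_def)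
  have cd: "cmod d = sqrt m" by (simp add: m_def dX_def dY_def norm_complex_def)
  have m: "m > 0" using d0 by (simp add: m_def dX_def dY_def complex_eq_iff sum_power2_gt_zero_iff)
  define D where "D = sqrt (p^2*dX^2 + m*q)"
  have D2: "D^2 = p^2*dX^2 + m*q" unfolding D_def using m q by (simp add: add_nonneg_nonneg)
  have "\<bar>p*dX\<bar>^2 < p^2*dX^2 + m*q" using m q by (simp add: power_mult_distrib)
  hence Dgt: "\<bar>p*dX\<bar> < D" unfolding D_def by (rule real_less_rsqrt)
  define a1 where "a1 = (-p*dX - D)/m"
  define a2 where "a2 = (-p*dX + D)/m"
  have sum: "m*(a1+a2) = -2*p*dX" unfolding a1_def a2_def using m by (simp add: field_simps)
  have prod: "m*a1*a2 = p^2 - 1"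
  proof -
    have "m*a1*a2 = ((p*dX)^2 - D^2)/m" unfolding a1_def a2_def using m
      by (simp add: field_simps power2_eq_square)
    also have "\<dots> = p^2 - 1" unfolding D2 q_def using m by (simp add: field_simps power2_eq_square)
    finally show ?thesis .
  qed
  have fact: "m*a^2 + 2*p*dX*a + p^2 - 1 = m*(a-a1)*(a-a2)" for a
  proof -
    have "m*(a-a1)*(a-a2) = m*a^2 - (m*(a1+a2))*a + m*a1*a2" by (simp add: algebra_simps power2_eq_square)
    thus ?thesis unfolding sum prod by simp
  qed
  have normsq: "(cmod (x + of_real a * d))^2 = m*a^2 + 2*p*dX*a + p^2" for a
    unfolding cmod_power2 by (simp add: x_def m_def dX_def dY_def power2_eq_square algebra_simps)
  have yxd: "y = x + d" by (simp add: d_def)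
  have a12: "a1 < a2" unfolding a1_def a2_def using m Dgt by (simp add: divide_strict_right_mono)
  have "m*(0-a1)*(0-a2) < 0" using fact[of 0] prod q unfolding q_def by simp
  hence "a1*a2 < 0" using m by (auto simp: mult_less_0_iff zero_less_mult_iff)
  hence a1n: "a1 < 0" using a12 by (auto simp: mult_less_0_iff)
  have "(cmod (x + of_real 1 * d))^2 < 1" using y yxd by (simp add: power_less_one_iff abs_square_less_1)
  hence "m*(1-a1)*(1-a2) < 0" using fact[of 1] normsq[of 1] by simp
  hence "(1-a1)*(1-a2) < 0" using m by (auto simp: mult_less_0_iff zero_less_mult_iff)
  hence a2g: "a2 > 1" using a12 by (auto simp: mult_less_0_iff)
  have roots: "a = a1 \<or> a = a2" if "cmod (x + of_real a * d) = 1" for a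
  proof -
    have "m*(a-a1)*(a-a2) = 0" using normsq[of a] fact[of a] that by simp
    thus ?thesis using m by simp
  qed
  have on1: "cmod (x + of_real a * d) = 1" if "a = a1 \<or> a = a2" for a
  proof -
    have z: "m*(a-a1)*(a-a2) = 0" using that by auto
    have "(cmod (x + of_real a * d))^2 = 1" using normsq[of a] fact[of a] z by linarith
    thus ?thesis using norm_ge_zero[of "x + of_real a * d"] by (auto simp add: power2_eq_1_iff)
  qed
  have dx: "cmod (x + of_real a * d - x) = \<bar>a\<bar> * sqrt m" for a
    by (simp add: norm_mult cd)
  have dy: "cmod (x + of_real a * d - y) = \<bar>a - 1\<bar> * sqrt m" for a
  proof -
    have "x + of_real a * d - y = of_real (a - 1) * d" by (simp add: yxd algebra_simps)
    thus ?thesis by (simp only: norm_mult norm_of_real cd)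
  qed
  have sm: "sqrt m > 0" using m by simp
  define u where "u = x + of_real a1 * d"
  define v where "v = x + of_real a2 * d"
  have Pu: "cmod u = 1 \<and> (\<exists>a::real. u = x + of_real a * (y - x)) \<and> cmod (u - x) < cmod (u - y)"
  proof -
    have "cmod (u - x) = - a1 * sqrt m" using dx[of a1] a1n unfolding u_def by simp
    moreover have "cmod (u - y) = (1 - a1) * sqrt m" using dy[of a1] a1n unfolding u_def by simp
    moreover have "- a1 * sqrt m < (1 - a1) * sqrt m" using sm by (simp add: algebra_simps)
    ultimately show ?thesis using on1[of a1] unfolding u_def d_def by auto
  qed
  have hu: "chord_u x y = u" unfolding chord_u_def
  proof (rule the_equality)
    show "cmod u = 1 \<and> (\<exists>a::real. u = x + of_real a * (y - x)) \<and> cmod (u - x) < cmod (u - y)" by (rule Pu)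
  next
    fix w assume w: "cmod w = 1 \<and> (\<exists>a::real. w = x + of_real a * (y - x)) \<and> cmod (w - x) < cmod (w - y)"
    then obtain a where a: "w = x + of_real a * d" by (auto simp: d_def)
    have "a = a1 \<or> a = a2" using roots[of a] w a by simp
    moreover have "a \<noteq> a2"
    proof
      assume "a = a2"
      hence "cmod (w - x) = a2 * sqrt m" "cmod (w - y) = (a2 - 1) * sqrt m"
        using dx[of a2] dy[of a2] a a2g by auto
      thus False using w sm by (simp add: mult_le_cancel_right)
    qed
    ultimately show "w = u" using a u_def by simp
  qed
  have uv: "u \<noteq> v" unfolding u_def v_def using a12 d0 by simp
  have hv: "chord_v x y = v" unfolding chord_v_def hu
  proof (rule the_equality)
    show "cmod v = 1 \<and> (\<exists>a::real. v = x + of_real a * (y - x)) \<and> v \<noteq> u"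
      unfolding v_def using on1[of a2] uv d_def v_def by auto
  next
    fix w assume w: "cmod w = 1 \<and> (\<exists>a::real. w = x + of_real a * (y - x)) \<and> w \<noteq> u"
    then obtain a where a: "w = x + of_real a * d" by (auto simp: d_def)
    have "a = a1 \<or> a = a2" using roots[of a] w a by simp
    thus "w = v" using a w u_def v_def by auto
  qed
  have n1: "cmod (u - y) = (1 - a1) * sqrt m" using dy[of a1] a1n u_def by simp
  have n2: "cmod (x - v) = a2 * sqrt m" using dx[of a2] a2g v_def by (simp add: norm_minus_commute)
  have n3: "cmod (u - x) = (-a1) * sqrt m" using dx[of a1] a1n u_def by simp
  have n4: "cmod (y - v) = (a2 - 1) * sqrt m" using dy[of a2] a2g v_def by (simp add: norm_minus_commute)
  define E where "E = ((1-a1)*a2)/((-a1)*(a2-1))"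
  have hE: "hilbert_h x y = ln E"
    unfolding hilbert_h_def using ne hu hv n1 n2 n3 n4 sm unfolding E_def x_def[symmetric]
    by (simp add: Let_def x_def)
  have Epos: "E > 0" unfolding E_def using a1n a2g by (intro divide_pos_pos mult_pos_pos) auto
  have "E \<ge> 1" unfolding E_def using a1n a2g a12 by (simp add: field_simps)
  hence h0: "ln E \<ge> 0" by simp
  have ReY: "Re y = p + dX" by (simp add: yxd x_def dX_def)
  have ny: "(cmod y)^2 = m + 2*p*dX + p^2" using normsq[of 1] yxd by simp
  have k1: "1 - p * Re y = m*(-a1*a2 + (a1+a2)/2)" unfolding ReY using sum prod
    by (simp add: algebra_simps power2_eq_square)
  have k2: "1 - (cmod y)^2 = -m*(1-a1)*(1-a2)" using fact[of 1] ny by simp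
  have k3: "1 - p^2 = -m*a1*a2" using prod by simp
  have "Kq p y = (m*(-a1*a2 + (a1+a2)/2))^2 / ((-m*a1*a2) * (-m*(1-a1)*(1-a2)))"
    unfolding Kq_def k1 k2 k3 ..
  also have "\<dots> = (m^2 * (-a1*a2 + (a1+a2)/2)^2) / (m^2 * (a1*a2*((1-a1)*(1-a2))))"
    by (rule arg_cong2[where f="(/)"]) (simp_all add: power2_eq_square algebra_simps)
  also have "\<dots> = (-a1*a2 + (a1+a2)/2)^2 / (a1*a2*((1-a1)*(1-a2)))"
    using m by simp
  finally have K: "Kq p y = (-a1*a2 + (a1+a2)/2)^2 / (a1*a2*((1-a1)*(1-a2)))" .
  define A where "A = -a1*a2 + (a1+a2)/2"
  define P where "P = (-a1)*a2*(1-a1)*(a2-1)"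
  have Pp: "P > 0" unfolding P_def using a1n a2g by (intro mult_pos_pos) auto
  have id: "((1-a1)*a2)^2 + (a1*(a2-1))^2 = 4*A^2 - 2*P"
    by (simp add: A_def P_def power2_eq_square algebra_simps)
  have EE: "E + inverse E = (((1-a1)*a2)^2 + (a1*(a2-1))^2)/P"
    unfolding E_def P_def using a1n a2g by (simp add: field_simps power2_eq_square)
  have K': "Kq p y = A^2/P" unfolding K A_def P_def by (simp add: algebra_simps)
  have "cosh (ln E) = (E + inverse E)/2" using Epos by (rule cosh_ln_real)
  also have "\<dots> = 2 * Kq p y - 1" unfolding EE id K' using Pp
    by (simp add: field_simps)
  finally show ?thesis using hE h0 x_def by simp
qed


definition Lq :: "real \<Rightarrow> complex \<Rightarrow> real" where
  "Lq p y = 1 + (cmod (of_real p - y))^2 / ((1 - p^2) * (1 - (cmod y)^2))"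

lemma sq_less_iff: "(a::real) \<ge> 0 \<Longrightarrow> b \<ge> 0 \<Longrightarrow> a < b \<longleftrightarrow> a^2 < b^2"
  by (meson power_less_imp_less_base power_strict_mono zero_less_numeral)

lemma q_pos: "-1 < (p::real) \<Longrightarrow> p < 1 \<Longrightarrow> 1 - p^2 > 0"
proof -
  assume "-1 < p" "p < 1"
  hence "p^2 < 1" by (simp add: abs_square_less_1 abs_less_iff)
  thus ?thesis by simp
qed

lemma N_pos: "cmod (y::complex) < 1 \<Longrightarrow> 1 - (cmod y)^2 > 0"
  by (simp add: power_less_one_iff abs_square_less_1)

lemma h_less:
  assumes p: "-1 < p" "p < 1" and y: "cmod y < 1" and t: "t > 0"
  shows "hilbert_h (of_real p) y < t \<longleftrightarrow> Kq p y < (cosh t + 1)/2"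
proof (cases "y = of_real p")
  case True
  have q: "1 - p^2 > 0" using q_pos p by simp
  have "Kq p y = 1" unfolding True Kq_def using q by (simp add: power2_eq_square)
  moreover have "cosh t > 1" using cosh_real_ge_1[of t] cosh_real_one_iff[of t] t
    by (metis order_le_less less_irrefl)
  moreover have "hilbert_h (of_real p) y = 0" using True by (simp add: hilbert_h_def)
  ultimately show ?thesis using t by simp
next
  case False
  from chord_cosh[OF p y False] have h0: "hilbert_h (of_real p) y \<ge> 0"
    and hc: "cosh (hilbert_h (of_real p) y) = 2 * Kq p y - 1" by auto
  have "hilbert_h (of_real p) y < t \<longleftrightarrow> cosh (hilbert_h (of_real p) y) < cosh t"
    using h0 t by (simp add: cosh_real_nonneg_less_iff)
  thus ?thesis unfolding hc by auto
qed

lemma rho_less: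
  assumes p: "-1 < p" "p < 1" and y: "cmod y < 1" and s: "s > 0"
  shows "hyp_rho (of_real p) y < s \<longleftrightarrow> Lq p y < (cosh (s/2))^2"
proof -
  define Q where "Q = (1 - p^2) * (1 - (cmod y)^2)"
  have Q: "Q > 0" unfolding Q_def using q_pos[OF p] N_pos[OF y] by simp
  define A where "A = cmod (of_real p - y) / sqrt Q"
  have A0: "A \<ge> 0" unfolding A_def using Q by simp
  have hr: "hyp_rho (of_real p) y = 2 * arsinh A" unfolding hyp_rho_def A_def Q_def by simp
  have "hyp_rho (of_real p) y < s \<longleftrightarrow> arsinh A < arsinh (sinh (s/2))"
    unfolding hr arsinh_sinh_real by linarith
  also have "\<dots> \<longleftrightarrow> A < sinh (s/2)" by simp
  also have "\<dots> \<longleftrightarrow> A^2 < (sinh (s/2))^2" using A0 s by (intro sq_less_iff) auto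
  also have "\<dots> \<longleftrightarrow> 1 + A^2 < (cosh (s/2))^2" unfolding cosh_square_eq by linarith
  also have "1 + A^2 = Lq p y" unfolding A_def Lq_def Q_def[symmetric] using Q
    by (simp add: power_divide)
  finally show ?thesis .
qed

lemma LK:
  assumes p: "-1 < p" "p < 1" and y: "cmod y < 1"
  shows "Lq p y = ((1 - p * Re y)^2 + p^2 * (Im y)^2) / ((1 - p^2) * (1 - (cmod y)^2))"
    and "Kq p y = (1 - p * Re y)^2 / ((1 - p^2) * (1 - (cmod y)^2))"
proof -
  define Q where "Q = (1 - p^2) * (1 - (cmod y)^2)"
  have Q: "Q > 0" unfolding Q_def using q_pos[OF p] N_pos[OF y] by simp
  have "Q + (cmod (of_real p - y))^2 = (1 - p * Re y)^2 + p^2 * (Im y)^2"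
    unfolding Q_def cmod_power2 by (simp add: power2_eq_square algebra_simps)
  thus "Lq p y = ((1 - p * Re y)^2 + p^2 * (Im y)^2) / ((1 - p^2) * (1 - (cmod y)^2))"
    unfolding Lq_def Q_def[symmetric] using Q by (simp add: field_simps)
  show "Kq p y = (1 - p * Re y)^2 / ((1 - p^2) * (1 - (cmod y)^2))" by (simp add: Kq_def)
qed

lemma K_le_L:
  assumes p: "-1 < p" "p < 1" and y: "cmod y < 1"
  shows "Kq p y \<le> Lq p y"
  unfolding LK[OF p y] using q_pos[OF p] N_pos[OF y]
  by (intro divide_right_mono) auto

lemma K_eq_L:
  assumes p: "-1 < p" "p < 1" and y: "cmod y < 1" and "Im y = 0"
  shows "Kq p y = Lq p y"
  unfolding LK[OF p y] using assms by simp

lemma alg2: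
  fixes p X Y C q N :: real
  assumes q: "q = 1 - p^2" "q > 0" and N: "N = 1 - X^2 - Y^2" "N > 0"
    and h: "(1 - p*X)^2 / (q*N) < C"
  shows "((1 - p*X)^2 + p^2*Y^2) / (q*N) < (C - p^2)/q"
proof -
  have qN: "q*N > 0" using q N by simp
  have h1: "(1 - p*X)^2 < C*(q*N)" using h qN by (simp add: pos_divide_less_eq)
  have I1: "(1 - p*X)^2 + p^2*Y^2 + p^2*N = 1 - 2*p*X + p^2"
    unfolding N by (simp add: power2_eq_square algebra_simps)
  have I2: "q*(1 - 2*p*X + p^2) = (1 - p*X)^2 - p^2*(X-p)^2"
    unfolding q by (simp add: power2_eq_square algebra_simps)
  have nn: "p^2*(X-p)^2 \<ge> 0" by simp
  have "q*((1 - p*X)^2 + p^2*Y^2) = q*((1 - p*X)^2 + p^2*Y^2 + p^2*N) - q*(p^2*N)"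
    by (simp add: algebra_simps)
  also have "\<dots> = q*(1 - 2*p*X + p^2) - q*(p^2*N)" unfolding I1 ..
  also have "\<dots> < C*(q*N) - q*(p^2*N)" using I2 nn h1 by linarith
  also have "\<dots> = q*((C - p^2)*N)" by (simp add: algebra_simps)
  finally have "(1 - p*X)^2 + p^2*Y^2 < (C - p^2)*N" using q by simp
  hence "((1 - p*X)^2 + p^2*Y^2) / (q*N) < ((C - p^2)*N)/(q*N)"
    by (rule divide_strict_right_mono[OF _ qN])
  also have "\<dots> = (C - p^2)/q" using N by simp
  finally show ?thesis .
qed


lemma alg3:
  fixes w qq DD SS :: real
  assumes "qq \<noteq> 0" "DD \<noteq> 0" "DD = qq*SS + w" "w = 1 - qq"
  shows "(qq^2 + w*(qq - qq/DD))/(qq*(qq/DD)) = SS"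
proof -
  have "qq - qq/DD = qq*(DD-1)/DD" using assms(2) by (simp add: field_simps)
  hence "(qq^2 + w*(qq - qq/DD))/(qq*(qq/DD)) = (qq^2 + w*(qq*(DD-1)/DD))/(qq*(qq/DD))" by simp
  also have "\<dots> = (qq*DD + w*(DD-1))/qq" using assms(1,2) by (simp add: field_simps power2_eq_square)
  also have "qq*DD + w*(DD-1) = qq*SS" unfolding assms(3,4) by (simp add: algebra_simps)
  also have "qq*SS/qq = SS" using assms(1) by simp
  finally show ?thesis .
qed

theorem mainTheorem9:
  fixes z0 t r :: real
  assumes "0 < z0" and "z0 < 1" and "0 < t" and "r = exp t"
  shows "is_greatest {s. 0 < s \<and> ball_rho (complex_of_real z0) s \<subseteq> ball_h (complex_of_real z0) t} t
    \<and> (\<exists>s. tanh (s / 2) = (r - 1) / sqrt ((r + 1)\<^sup>2 - 4 * r * z0\<^sup>2)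
           \<and> is_least {s. 0 < s \<and> ball_h (complex_of_real z0) t \<subseteq> ball_rho (complex_of_real z0) s} s)"
proof -
  have p: "-1 < z0" "z0 < 1" using assms by auto
  have t: "t > 0" using assms by simp
  define q where "q = 1 - z0^2"
  have q: "q > 0" unfolding q_def using q_pos[OF p] .
  have z2: "z0^2 < 1" using q unfolding q_def by simp
  define C where "C = (cosh t + 1)/2"
  have Ct: "(cosh (t/2))^2 = C" using cosh_double_cosh[of "t/2"] by (simp add: C_def)
  have "cosh t > 1" using cosh_real_ge_1[of t] cosh_real_one_iff[of t] t
    by (metis order_le_less less_irrefl)
  hence C1: "C > 1" unfolding C_def by simp
  have r1: "r > 1" using assms by simp
  have Cr: "C = (r+1)^2/(4*r)"
  proof -
    have "cosh t = (r + inverse r)/2" unfolding cosh_field_def using assms by (simp add: exp_minus)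
    thus ?thesis unfolding C_def using r1 by (simp add: field_simps power2_eq_square)
  qed
  have P1: "is_greatest {s. 0 < s \<and> ball_rho (complex_of_real z0) s \<subseteq> ball_h (complex_of_real z0) t} t"
    unfolding is_greatest_def
  proof (intro conjI ballI)
    have "ball_rho (complex_of_real z0) t \<subseteq> ball_h (complex_of_real z0) t"
    proof
      fix y assume "y \<in> ball_rho (complex_of_real z0) t"
      hence y: "cmod y < 1" and hr: "hyp_rho (complex_of_real z0) y < t"
        by (auto simp: ball_rho_def unit_disk_def)
      have "Lq z0 y < C" using hr rho_less[OF p y t] Ct by simp
      hence "Kq z0 y < C" using K_le_L[OF p y] by simp
      hence "hilbert_h (complex_of_real z0) y < t" using h_less[OF p y t] C_def by simp
      thus "y \<in> ball_h (complex_of_real z0) t" using y by (simp add: ball_h_def unit_disk_def)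
    qed
    thus "t \<in> {s. 0 < s \<and> ball_rho (complex_of_real z0) s \<subseteq> ball_h (complex_of_real z0) t}"
      using t by simp
  next
    fix s' assume "s' \<in> {s. 0 < s \<and> ball_rho (complex_of_real z0) s \<subseteq> ball_h (complex_of_real z0) t}"
    hence s'0: "s' > 0" and sub: "ball_rho (complex_of_real z0) s' \<subseteq> ball_h (complex_of_real z0) t"
      by auto
    show "s' \<le> t"
    proof (rule ccontr)
      assume "\<not> s' \<le> t"
      hence ts: "t < s'" by simp
      define \<tau> where "\<tau> = sqrt (1 - 1/C)"
      have "1/C < 1" using C1 by simp
      hence \<tau>2: "\<tau>^2 = 1 - 1/C" unfolding \<tau>_def by simp
      have \<tau>0: "\<tau> \<ge> 0" unfolding \<tau>_def using \<open>1/C < 1\<close> by simp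
      have \<tau>1: "1 - \<tau>^2 > 0" using \<tau>2 C1 by simp
      have pt: "1 + z0*\<tau> > 0" using assms \<tau>0 by (simp add: add_pos_nonneg)
      define X where "X = (z0 + \<tau>)/(1 + z0*\<tau>)"
      have e1: "1 - X^2 = q*(1-\<tau>^2)/(1+z0*\<tau>)^2"
      proof -
        have "1 - X^2 = ((1+z0*\<tau>)^2 - (z0+\<tau>)^2)/(1+z0*\<tau>)^2"
          unfolding X_def power_divide using pt by (simp add: diff_divide_distrib)
        also have "(1+z0*\<tau>)^2 - (z0+\<tau>)^2 = q*(1-\<tau>^2)"
          unfolding q_def by (simp add: power2_eq_square algebra_simps)
        finally show ?thesis .
      qed
      have e2: "1 - z0*X = q/(1+z0*\<tau>)"
        unfolding X_def q_def using pt by (simp add: field_simps power2_eq_square)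
      have X1: "1 - X^2 > 0" unfolding e1 using q \<tau>1 pt by simp
      define y where "y = complex_of_real X"
      have y: "cmod y < 1" using X1 unfolding y_def by (simp add: abs_square_less_1)
      have "Kq z0 y = (1 - z0*X)^2/(q*(1-X^2))" unfolding Kq_def y_def q_def by simp
      also have "\<dots> = 1/(1-\<tau>^2)"
      proof -
        have n1: "1 - \<tau>^2 \<noteq> 0" using \<tau>1 by simp
        have n2: "(1+z0*\<tau>)^2 \<noteq> 0" using pt by simp
        have n3: "q \<noteq> 0" using q by simp
        have gen: "\<And>P T. P \<noteq> 0 \<Longrightarrow> T \<noteq> 0 \<Longrightarrow> (q/P)^2/(q*(q*T/P^2)) = 1/T"
          using n3 by (simp add: field_simps power2_eq_square)
        show ?thesis unfolding e1 e2 using n1 pt by (intro gen) auto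
      qed
      also have "\<dots> = C" unfolding \<tau>2 using C1 by simp
      finally have KC: "Kq z0 y = C" .
      have LC: "Lq z0 y = C" using K_eq_L[OF p y] KC unfolding y_def by simp
      have "cosh (t/2) < cosh (s'/2)" using ts t by (simp add: cosh_real_nonneg_less_iff)
      hence "(cosh (t/2))^2 < (cosh (s'/2))^2" by (simp add: power_strict_mono)
      hence "hyp_rho (complex_of_real z0) y < s'" using rho_less[OF p y s'0] LC Ct by simp
      hence "y \<in> ball_h (complex_of_real z0) t" using sub y by (auto simp: ball_rho_def unit_disk_def)
      hence "hilbert_h (complex_of_real z0) y < t" by (simp add: ball_h_def)
      hence "Kq z0 y < C" using h_less[OF p y t] C_def by simp
      thus False using KC by simp
    qed
  qed
  define M where "M = (C - z0^2)/q"
  have M1: "M > 1" unfolding M_def using q C1 unfolding q_def by (simp add: field_simps)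
  have sM: "sqrt M > 1" using M1 by simp
  define s where "s = 2 * arcosh (sqrt M)"
  have s2: "s/2 = arcosh (sqrt M)" by (simp add: s_def)
  have cs: "cosh (s/2) = sqrt M" unfolding s2 using sM by simp
  have csM: "(cosh (s/2))^2 = M" unfolding cs using M1 by simp
  have ss: "sinh (s/2) = sqrt (M - 1)" unfolding s2 using sM M1 by (simp add: sinh_arcosh_real)
  have s0: "s > 0" unfolding s_def using sM by simp
  define Q where "Q = (r + 1)^2 - 4 * r * z0^2"
  have "4*r*z0^2 < 4*r*1" using z2 r1 by simp
  moreover have "4*r \<le> (r+1)^2" using sum_power2_ge_zero[of "r-1" 0]
    by (simp add: power2_eq_square algebra_simps)
  ultimately have Q: "Q > 0" unfolding Q_def by simp
  have MM: "(M - 1)/M = (r-1)^2/Q"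
  proof -
    have a: "M - 1 = (r-1)^2/(4*r*q)" unfolding M_def Cr q_def using q r1 unfolding q_def
      by (simp add: field_simps power2_eq_square)
    have b: "M = Q/(4*r*q)" unfolding M_def Cr Q_def using q r1 unfolding q_def
      by (simp add: field_simps power2_eq_square)
    have "(M - 1)/M = ((r-1)^2/(4*r*q)) / (Q/(4*r*q))" by (subst a, subst b, rule refl)
    also have "\<dots> = (r-1)^2/Q" using q r1 Q by (simp add: field_simps)
    finally show ?thesis .
  qed
  have tanh_s: "tanh (s/2) = (r - 1) / sqrt ((r + 1)\<^sup>2 - 4 * r * z0\<^sup>2)"
  proof -
    have "tanh (s/2) = sqrt (M - 1)/sqrt M" unfolding tanh_def ss cs ..
    also have "\<dots> = sqrt ((r-1)^2/Q)" by (simp add: real_sqrt_divide[symmetric] MM)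
    also have "\<dots> = (r-1)/sqrt Q" using r1 by (simp add: real_sqrt_divide)
    finally show ?thesis unfolding Q_def .
  qed
  have P2: "is_least {s. 0 < s \<and> ball_h (complex_of_real z0) t \<subseteq> ball_rho (complex_of_real z0) s} s"
    unfolding is_least_def
  proof (intro conjI ballI)
    have "ball_h (complex_of_real z0) t \<subseteq> ball_rho (complex_of_real z0) s"
    proof
      fix y assume "y \<in> ball_h (complex_of_real z0) t"
      hence y: "cmod y < 1" and hh: "hilbert_h (complex_of_real z0) y < t"
        by (auto simp: ball_h_def unit_disk_def)
      have "Kq z0 y < C" using hh h_less[OF p y t] C_def by simp
      hence "(1 - z0 * Re y)^2 / (q * (1 - (Re y)^2 - (Im y)^2)) < C"
        unfolding LK(2)[OF p y] q_def cmod_power2 by (simp add: algebra_simps)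
      hence "((1 - z0 * Re y)^2 + z0^2 * (Im y)^2) / (q * (1 - (Re y)^2 - (Im y)^2)) < (C - z0^2)/q"
        using N_pos[OF y] q
        by (intro alg2[where q=q and N="1 - (Re y)^2 - (Im y)^2"]) (auto simp: q_def cmod_power2)
      hence "Lq z0 y < M" unfolding LK(1)[OF p y] M_def q_def cmod_power2 by (simp add: algebra_simps)
      hence "hyp_rho (complex_of_real z0) y < s" using rho_less[OF p y s0] csM by simp
      thus "y \<in> ball_rho (complex_of_real z0) s" using y by (simp add: ball_rho_def unit_disk_def)
    qed
    thus "s \<in> {s. 0 < s \<and> ball_h (complex_of_real z0) t \<subseteq> ball_rho (complex_of_real z0) s}"
      using s0 by simp
  next
    fix s' assume "s' \<in> {s. 0 < s \<and> ball_h (complex_of_real z0) t \<subseteq> ball_rho (complex_of_real z0) s}"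
    hence s'0: "s' > 0" and sub: "ball_h (complex_of_real z0) t \<subseteq> ball_rho (complex_of_real z0) s'"
      by auto
    show "s \<le> s'"
    proof (rule ccontr)
      assume "\<not> s \<le> s'"
      hence ss': "s' < s" by simp
      define S where "S = (cosh (s'/2))^2"
      have "cosh (s'/2) < cosh (s/2)" using ss' s'0 by (simp add: cosh_real_nonneg_less_iff)
      hence SM: "S < M" unfolding S_def csM[symmetric] by (simp add: power_strict_mono)
      have S1: "S \<ge> 1" unfolding S_def using cosh_real_ge_1[of "s'/2"] by (simp add: one_le_power)
      define D where "D = q*S + z0^2"
      have D1: "D \<ge> 1" unfolding D_def q_def using S1 z2
        by (smt (verit) mult_left_mono mult_cancel_left1)
      have DC: "D < C" unfolding D_def using SM q unfolding M_def by (simp add: field_simps)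
      define N0 where "N0 = q/D"
      have N0: "N0 > 0" unfolding N0_def using q D1 by simp
      have N0q: "N0 \<le> q" unfolding N0_def using q D1 by (simp add: divide_le_eq)
      define Yv where "Yv = sqrt (q - N0)"
      have Yv2: "Yv^2 = q - N0" unfolding Yv_def using N0q by simp
      define y where "y = Complex z0 Yv"
      have ny: "1 - (cmod y)^2 = N0" unfolding cmod_power2 y_def using Yv2 unfolding q_def by simp
      have y: "cmod y < 1"
      proof -
        have "(cmod y)^2 < 1" using ny N0 by simp
        thus ?thesis by (simp add: abs_square_less_1)
      qed
      have "Kq z0 y = (1 - z0 * Re y)^2/((1-z0^2)*(1-(cmod y)^2))" by (rule LK(2)[OF p y])
      also have "\<dots> = q^2/(q*N0)" unfolding ny by (simp add: y_def q_def power2_eq_square)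
      also have "\<dots> = D" unfolding N0_def using q D1 by (simp add: field_simps power2_eq_square)
      finally have KD: "Kq z0 y = D" .
      hence "hilbert_h (complex_of_real z0) y < t" using h_less[OF p y t] C_def DC by simp
      hence "y \<in> ball_rho (complex_of_real z0) s'" using sub y by (auto simp: ball_h_def unit_disk_def)
      hence Lless: "Lq z0 y < S" unfolding S_def using rho_less[OF p y s'0] by (simp add: ball_rho_def)
      have "Lq z0 y = ((1 - z0 * Re y)^2 + z0^2 * (Im y)^2)/((1-z0^2)*(1-(cmod y)^2))"
        by (rule LK(1)[OF p y])
      also have "\<dots> = (q^2 + z0^2*(q - N0))/(q*N0)"
        unfolding ny using Yv2 by (simp add: y_def q_def power2_eq_square)
      also have "\<dots> = S"
      proof -
        show ?thesis unfolding N0_def using q D1 by (intro alg3) (auto simp: D_def q_def)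
      qed
      finally show False using Lless by simp
    qed
  qed
  show ?thesis using P1 P2 tanh_s by blast
qed

end
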